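(* Let $G_0,G_1\in\mathbb{Z}$ and let $(G_n)_{n\ge 0}$ be defined by $G_n=G_{n-1}+G_{n-2}$ for $n\ge 2$. For every integer $k \geq 1$, $$\mathcal{G}^2_{G_0,G_1}(k) = \gcd\left(G_k G_{k+1} - G_0 G_1,\; G_{k+1}^2 - G_1^2,\; G_{k+2}^2 - G_2^2\right),$$ where $\mathcal{G}^2_{G_0,G_1}(k)$ denotes the greatest common divisor of all the integers $\sum_{i=1}^k G_{n+i}^2$ for $n \ge 0$.
   Context: $(G_n)_{n\ge0}$ is a generalized Fibonacci (Gibonacci) sequence with arbitrary integer initial values $G_0,G_1$. $\mathcal{G}^2_{G_0,G_1}(k)=\gcd\{\sum_{i=1}^k G_{n+i}^2 : n\ge 0\}$, the gcd of the infinitely many sums of $k$ consecutive squares starting after index $n$ (taken nonnegative). *)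

theory Defs
  imports Main
begin

fun gib :: "int \<Rightarrow> int \<Rightarrow> nat \<Rightarrow> int" where
  "gib a b 0 = a"
| "gib a b (Suc 0) = b"
| "gib a b (Suc (Suc n)) = gib a b (Suc n) + gib a b n"

definition gibSqGcd :: "int \<Rightarrow> int \<Rightarrow> nat \<Rightarrow> int" where
  "gibSqGcd a b k = Gcd {(\<Sum>i=1..k. (gib a b (n + i))^2) | n. True}"

end

theory Submission
  imports Defs
begin

lemma gib_sq_rec:
  "(gib a b (n+3))^2 = 2*(gib a b (n+2))^2 + 2*(gib a b (n+1))^2 - (gib a b n)^2"
proof -
  have e2: "gib a b (n+2) = gib a b (n+1) + gib a b n" by (simp add: numeral_eq_Suc)
  have e3: "gib a b (n+3) = gib a b (n+2) + gib a b (n+1)" by (simp add: numeral_eq_Suc)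
  show ?thesis unfolding e3 e2 by (simp add: power2_eq_square algebra_simps)
qed

lemma gib_sum_sq:
  "(\<Sum>i=1..m. (gib a b i)^2) = gib a b m * gib a b (m+1) - gib a b 0 * gib a b 1"
proof (induction m)
  case 0
  then show ?case by simp
next
  case (Suc m)
  have "gib a b (Suc m + 1) = gib a b (Suc m) + gib a b m" by simp
  then show ?case using Suc by (simp add: power2_eq_square algebra_simps)
qed

lemma shift_sum:
  fixes f :: "nat \<Rightarrow> int"
  shows "(\<Sum>i=1..k. f (Suc n + i)) = (\<Sum>i=1..k. f (n + i)) + f (n+k+1) - f (n+1)"
proof (induction k)
  case 0
  then show ?case by simp
next
  case (Suc k)
  then show ?case by (simp add: sum.cl_ivl_Suc)
qed

theorem theorem3p4:
  fixes a b :: int and k :: nat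
  assumes "k \<ge> 1"
  shows "gibSqGcd a b k =
    gcd (gib a b k * gib a b (k+1) - gib a b 0 * gib a b 1)
      (gcd ((gib a b (k+1))^2 - (gib a b 1)^2) ((gib a b (k+2))^2 - (gib a b 2)^2))"
proof -
  define S where "S n = (\<Sum>i=1..k. (gib a b (n + i))^2)" for n
  define D where "D = gcd (gib a b k * gib a b (k+1) - gib a b 0 * gib a b 1)
      (gcd ((gib a b (k+1))^2 - (gib a b 1)^2) ((gib a b (k+2))^2 - (gib a b 2)^2))"
  have S0: "S 0 = gib a b k * gib a b (k+1) - gib a b 0 * gib a b 1"
    unfolding S_def using gib_sum_sq by simp
  have Ssuc: "S (Suc n) = S n + (gib a b (n+k+1))^2 - (gib a b (n+1))^2" for n
    unfolding S_def by (rule shift_sum)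
  have S1: "S 1 = S 0 + ((gib a b (k+1))^2 - (gib a b 1)^2)"
    using Ssuc[of 0] by simp
  have S2: "S 2 = S 1 + ((gib a b (k+2))^2 - (gib a b 2)^2)"
    using Ssuc[of 1] by (simp add: numeral_eq_Suc)
  have Srec: "S (n+3) = 2 * S (n+2) + 2 * S (n+1) - S n" for n
  proof -
    have "S (n+3) = (\<Sum>i=1..k. 2*(gib a b (n+2+i))^2 + 2*(gib a b (n+1+i))^2 - (gib a b (n+i))^2)"
      unfolding S_def
    proof (rule sum.cong)
      fix i assume "i \<in> {1..k}"
      have "n+3+i = (n+i)+3" "n+2+i = (n+i)+2" "n+1+i = (n+i)+1" by simp_all
      then show "(gib a b (n+3+i))^2 = 2*(gib a b (n+2+i))^2 + 2*(gib a b (n+1+i))^2 - (gib a b (n+i))^2"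
        using gib_sq_rec[of a b "n+i"] by (simp only:)
    qed simp
    also have "\<dots> = 2 * S (n+2) + 2 * S (n+1) - S n"
      unfolding S_def by (simp add: sum_subtractf sum.distrib sum_distrib_left add.assoc)
    finally show ?thesis .
  qed
  define X where "X = (gib a b (k+1))^2 - (gib a b 1)^2"
  define Y where "Y = (gib a b (k+2))^2 - (gib a b 2)^2"
  have DX: "D = gcd (S 0) (gcd X Y)" unfolding D_def X_def Y_def S0 ..
  have S1': "S 1 = S 0 + X" unfolding X_def S1 ..
  have S2': "S 2 = S 0 + X + Y" unfolding Y_def S2 S1' ..
  have dA: "D dvd S 0" unfolding DX by (rule gcd_dvd1)
  have dX: "D dvd X" unfolding DX by (meson gcd_dvd1 gcd_dvd2 dvd_trans)
  have dY: "D dvd Y" unfolding DX by (meson gcd_dvd2 dvd_trans)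
  have d0: "D dvd S 0" by (rule dA)
  have d1: "D dvd S 1" unfolding S1' using dA dX by (rule dvd_add)
  have d2: "D dvd S 2" unfolding S2' using dA dX dY by (intro dvd_add)
  have all: "D dvd S n \<and> D dvd S (n+1) \<and> D dvd S (n+2)" for n
  proof (induction n)
    case 0
    then show ?case using d0 d1 d2 by (simp add: numeral_2_eq_2)
  next
    case (Suc n)
    have "D dvd S (n+3)" unfolding Srec using Suc
      by (intro dvd_diff dvd_add dvd_mult) auto
    then show ?case using Suc by (simp add: numeral_eq_Suc)
  qed
  have set_eq: "{(\<Sum>i=1..k. (gib a b (n + i))^2) | n. True} = range S"
    unfolding S_def by auto
  have g: "gibSqGcd a b k = Gcd (range S)"
    unfolding gibSqGcd_def set_eq ..
  have h1: "D dvd Gcd (range S)"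
    by (rule Gcd_greatest) (use all in auto)
  have h2: "Gcd (range S) dvd D"
  proof -
    have "Gcd (range S) dvd S 0" "Gcd (range S) dvd S 1" "Gcd (range S) dvd S 2"
      by (auto intro: Gcd_dvd)
    then have "Gcd (range S) dvd X" "Gcd (range S) dvd Y"
      using dvd_diff[of "Gcd (range S)" "S 1" "S 0"] dvd_diff[of "Gcd (range S)" "S 2" "S 1"]
      unfolding S1' S2' by simp_all
    then show ?thesis unfolding DX using \<open>Gcd (range S) dvd S 0\<close> by simp
  qed
  have "Gcd (range S) = D"
    by (rule zdvd_antisym_nonneg) (use h1 h2 in \<open>auto simp: D_def\<close>)
  then show ?thesis using g D_def by simp
qed

end
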